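(* Let $H:\mathcal P N\times Ł_1^S\to Ł_1$ be a playable Boolean effectivity function and let $n\ge1$. Define $E:\mathcal P N\times Ł_n^S\to Ł_n$ by $E(C,f)=\max\{\tfrac in\in Ł_n\mid H(C,\tau_{i/n}(f))=1\}$ (with $\tau_{0}(f)$ understood as the constant $1$, so the set is nonempty). Then $E$ is a playable $Ł_n$-valued effectivity function with $E^\sharp=H$. If moreover $H$ is truly playable, then $E$ is truly playable.
   Context: For a positive integer $n$ let $Ł_n=\{0,\frac1n,\dots,1\}$ with $\neg x=1-x$, $x\oplus y=\min(x+y,1)$, $x\odot y=\max(x+y-1,0)$, $\wedge=\min$, $\vee=\max$, applied pointwise on $Ł_n^S$; $0,1$ also denote constant functions; $Ł_1^S=\{0,1\}^S$. For $i\in\{1,\dots,n\}$, $\tau_{i/n}:Ł_n\to Ł_n$ is $\tau_{i/n}(x)=1$ if $x\ge i/n$ and $0$ otherwise, applied pointwise to functions. $E^\sharp$ is the restriction of $E$ to $\mathcal P N\times Ł_1^S$. Standing assumptions: $N$ finite, $|N|\ge2$, $|S|\ge2$; $\overline C=N\setminus C$. An $Ł_n$-valued effectivity function is any map $E:\mathcal P N\times Ł_n^S\to Ł_n$ (Boolean when $n=1$). It is: outcome monotonic if $f\ge g$ implies $E(C,f)\ge E(C,g)$; $N$-maximal if $\neg E(\varnothing,\neg f)\le E(N,f)$; superadditive if $E(C_1,f)\wedge E(C_2,g)\le E(C_1\cup C_2,f\wedge g)$ whenever $C_1\cap C_2=\varnothing$; homogeneous if $E(C,f\oplus f)=E(C,f)\oplus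 E(C,f)$ and $E(C,f\odot f)=E(C,f)\odot E(C,f)$; has liveness if $E(C,1)=1$ for all $C$; has safety if $E(C,0)=0$ for all $C$; principal if there is $g$ with $\{f\mid E(\varnothing,f)=1\}=\{f\mid f\ge g\odot\cdots\odot g\ (n\text{ factors})\}$. Playable: outcome monotonic, $N$-maximal, superadditive, homogeneous, liveness and safety; truly playable: playable and principal. *)

theory Defs
  imports Main "HOL.Real"
begin

definition luk :: "nat \<Rightarrow> real set" where
  "luk n = {real i / real n | i. i \<le> n}"

definition lfun :: "nat \<Rightarrow> ('s \<Rightarrow> real) set" where
  "lfun n = {f. \<forall>s. f s \<in> luk n}"

definition loplus :: "real \<Rightarrow> real \<Rightarrow> real" where
  "loplus x y = min (x + y) 1"

definition lodot :: "real \<Rightarrow> real \<Rightarrow> real" where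
  "lodot x y = max (x + y - 1) 0"

fun lodot_pow :: "real \<Rightarrow> nat \<Rightarrow> real" where
  "lodot_pow x 0 = 1"
| "lodot_pow x (Suc k) = lodot x (lodot_pow x k)"

definition tau :: "real \<Rightarrow> ('s \<Rightarrow> real) \<Rightarrow> ('s \<Rightarrow> real)" where
  "tau t f = (\<lambda>s. if f s \<ge> t then 1 else 0)"

text \<open>An L_n-valued effectivity function: maps P N x L_n^S into L_n
  (only its values on L_n^S matter).\<close>
definition is_EF :: "nat \<Rightarrow> ('p set \<Rightarrow> ('s \<Rightarrow> real) \<Rightarrow> real) \<Rightarrow> bool" where
  "is_EF n E = (\<forall>C. \<forall>f\<in>lfun n. E C f \<in> luk n)"

definition outcome_monotonic :: "nat \<Rightarrow> ('p set \<Rightarrow> ('s \<Rightarrow> real) \<Rightarrow> real) \<Rightarrow> bool" where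
  "outcome_monotonic n E = (\<forall>C. \<forall>f\<in>lfun n. \<forall>g\<in>lfun n.
      (\<forall>s. g s \<le> f s) \<longrightarrow> E C g \<le> E C f)"

definition N_maximal :: "nat \<Rightarrow> ('p set \<Rightarrow> ('s \<Rightarrow> real) \<Rightarrow> real) \<Rightarrow> bool" where
  "N_maximal n E = (\<forall>f\<in>lfun n. 1 - E {} (\<lambda>s. 1 - f s) \<le> E UNIV f)"

definition superadditive :: "nat \<Rightarrow> ('p set \<Rightarrow> ('s \<Rightarrow> real) \<Rightarrow> real) \<Rightarrow> bool" where
  "superadditive n E = (\<forall>C1 C2. \<forall>f\<in>lfun n. \<forall>g\<in>lfun n. C1 \<inter> C2 = {} \<longrightarrow>
      min (E C1 f) (E C2 g) \<le> E (C1 \<union> C2) (\<lambda>s. min (f s) (g s)))"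

definition homogeneous :: "nat \<Rightarrow> ('p set \<Rightarrow> ('s \<Rightarrow> real) \<Rightarrow> real) \<Rightarrow> bool" where
  "homogeneous n E = (\<forall>C. \<forall>f\<in>lfun n.
      E C (\<lambda>s. loplus (f s) (f s)) = loplus (E C f) (E C f) \<and>
      E C (\<lambda>s. lodot (f s) (f s)) = lodot (E C f) (E C f))"

definition liveness :: "('p set \<Rightarrow> ('s \<Rightarrow> real) \<Rightarrow> real) \<Rightarrow> bool" where
  "liveness E = (\<forall>C. E C (\<lambda>_. 1) = 1)"

definition safety :: "('p set \<Rightarrow> ('s \<Rightarrow> real) \<Rightarrow> real) \<Rightarrow> bool" where
  "safety E = (\<forall>C. E C (\<lambda>_. 0) = 0)"

definition principal :: "nat \<Rightarrow> ('p set \<Rightarrow> ('s \<Rightarrow> real) \<Rightarrow> real) \<Rightarrow> bool" where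
  "principal n E = (\<exists>g\<in>lfun n.
      {f \<in> lfun n. E {} f = 1} = {f \<in> lfun n. \<forall>s. lodot_pow (g s) n \<le> f s})"

definition playable :: "nat \<Rightarrow> ('p set \<Rightarrow> ('s \<Rightarrow> real) \<Rightarrow> real) \<Rightarrow> bool" where
  "playable n E = (is_EF n E \<and> outcome_monotonic n E \<and> N_maximal n E \<and>
      superadditive n E \<and> homogeneous n E \<and> liveness E \<and> safety E)"

definition truly_playable :: "nat \<Rightarrow> ('p set \<Rightarrow> ('s \<Rightarrow> real) \<Rightarrow> real) \<Rightarrow> bool" where
  "truly_playable n E = (playable n E \<and> principal n E)"

end

theory Submission
  imports Defs
begin

lemma luk_n: "j \<le> n \<Longrightarrow> real j / real n \<in> luk n"
  unfolding luk_def by blast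

lemma luk1: "luk (Suc 0) = {0,1}"
proof
  show "luk (Suc 0) \<subseteq> {0,1}" unfolding luk_def by (auto simp: le_Suc_eq)
  have "real 0 / real (Suc 0) \<in> luk (Suc 0)" "real 1 / real (Suc 0) \<in> luk (Suc 0)"
    by (rule luk_n, simp)+
  thus "{0,1} \<subseteq> luk (Suc 0)" by simp
qed

lemma lfun1: "g \<in> lfun (Suc 0) \<longleftrightarrow> (\<forall>s. g s = 0 \<or> g s = 1)"
  by (simp add: lfun_def luk1)

lemma tau_lfun1: "tau t f \<in> lfun 1" by (simp add: lfun1 tau_def)

lemma lfunn: "f \<in> lfun n \<Longrightarrow> \<exists>j\<le>n. f s = real j / real n"
  unfolding lfun_def luk_def by blast

lemma lodot_pow1: "lodot_pow 1 k = 1" by (induction k) (auto simp: lodot_def)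
lemma lodot_pow0_le: "lodot_pow 0 k \<le> 1" by (induction k) (auto simp: lodot_def)
lemma lodot_pow0: "k \<ge> 1 \<Longrightarrow> lodot_pow 0 k = 0"
  by (cases k) (auto simp: lodot_def lodot_pow0_le)

lemma idx_eqI: "(\<forall>i\<le>(n::nat). i \<le> a \<longleftrightarrow> i \<le> b) \<Longrightarrow> a \<le> n \<Longrightarrow> b \<le> n \<Longrightarrow> a = b"
  by (meson le_antisym order_refl)


locale LL =
  fixes H E :: "'p set \<Rightarrow> ('s \<Rightarrow> real) \<Rightarrow> real" and n :: nat
  assumes n1: "n \<ge> 1" and H: "playable 1 H"
    and E_def: "\<forall>C f. E C f = Max {real i / real n | i. i \<le> n \<and> H C (tau (real i / real n) f) = 1}"
begin

definition A where "A C f = {i. i \<le> n \<and> H C (tau (real i / real n) f) = 1}"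
definition idx where "idx C f = Max (A C f)"

lemma Hval: "g \<in> lfun 1 \<Longrightarrow> H C g = 0 \<or> H C g = 1"
  using H unfolding playable_def is_EF_def by (auto simp: luk1)

lemma Hmono: "g \<in> lfun 1 \<Longrightarrow> h \<in> lfun 1 \<Longrightarrow> \<forall>s. g s \<le> h s \<Longrightarrow> H C g \<le> H C h"
  using H unfolding playable_def outcome_monotonic_def by blast

lemma Hge1: "g \<in> lfun 1 \<Longrightarrow> H C g \<ge> 1 \<Longrightarrow> H C g = 1"
proof -
  assume a: "g \<in> lfun 1" "H C g \<ge> 1"
  from Hval[OF a(1), of C] a(2) show ?thesis by auto
qed

lemma Hlive: "H C (\<lambda>_. 1) = 1" using H unfolding playable_def liveness_def by blast
lemma Hsafe: "H C (\<lambda>_. 0) = 0" using H unfolding playable_def safety_def by blast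

lemma divle: "real a / real n \<le> real b / real n \<longleftrightarrow> a \<le> b"
  using n1 by (simp add: divide_le_cancel)

lemma tau_mono_t: "t \<le> t' \<Longrightarrow> tau t' f s \<le> tau t f s" by (simp add: tau_def)
lemma tau_mono_f: "\<forall>s. g s \<le> f s \<Longrightarrow> tau t g s \<le> tau t f s"
  by (auto simp: tau_def dest: spec[of _ s])

lemma tau0: "\<forall>s. f s \<ge> 0 \<Longrightarrow> tau 0 f = (\<lambda>_. 1)" by (auto simp: tau_def)

lemma A_fin: "finite (A C f)" unfolding A_def by (rule finite_subset[of _ "{..n}"]) auto

lemma A0: "\<forall>s. f s \<ge> 0 \<Longrightarrow> 0 \<in> A C f"
  unfolding A_def using tau0[of f] Hlive by simp

lemma idx_in: "\<forall>s. f s \<ge> 0 \<Longrightarrow> idx C f \<in> A C f"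
  unfolding idx_def using A_fin A0 by (metis Max_in empty_iff)

lemma idx_le: "\<forall>s. f s \<ge> 0 \<Longrightarrow> idx C f \<le> n"
  using idx_in unfolding A_def by blast

lemma char: assumes "\<forall>s. f s \<ge> 0" "i \<le> n"
  shows "H C (tau (real i / real n) f) = 1 \<longleftrightarrow> i \<le> idx C f"
proof
  assume "H C (tau (real i / real n) f) = 1"
  hence "i \<in> A C f" using assms unfolding A_def by simp
  thus "i \<le> idx C f" unfolding idx_def using A_fin by simp
next
  assume "i \<le> idx C f"
  have "H C (tau (real (idx C f) / real n) f) = 1" using idx_in[OF assms(1)] unfolding A_def by simp
  moreover have "H C (tau (real (idx C f) / real n) f) \<le> H C (tau (real i / real n) f)"
  proof (rule Hmono[OF tau_lfun1 tau_lfun1])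
    have le: "real i / real n \<le> real (idx C f) / real n" using divle \<open>i \<le> idx C f\<close> by simp
    show "\<forall>s. tau (real (idx C f) / real n) f s \<le> tau (real i / real n) f s"
      by (intro allI tau_mono_t[OF le])
  qed
  ultimately show "H C (tau (real i / real n) f) = 1" using Hge1[OF tau_lfun1] by simp
qed

lemma E_idx: assumes "\<forall>s. f s \<ge> 0" shows "E C f = real (idx C f) / real n"
proof -
  have e: "{real i / real n | i. i \<le> n \<and> H C (tau (real i / real n) f) = 1} = (\<lambda>i. real i / real n) ` A C f"
    unfolding A_def by blast
  have m: "mono (\<lambda>i. real i / real n)" using divle by (simp add: mono_def)
  have ne: "A C f \<noteq> {}" using A0[OF assms] by auto
  have "E C f = Max ((\<lambda>i. real i / real n) ` A C f)" using E_def e by simp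
  also have "\<dots> = real (Max (A C f)) / real n"
    using mono_Max_commute[OF m A_fin ne] by simp
  finally show ?thesis unfolding idx_def .
qed

lemma lfun_nonneg: assumes "f \<in> lfun n" shows "\<forall>s. f s \<ge> 0"
proof
  fix s obtain j where "f s = real j / real n" using lfunn[OF assms] by blast
  thus "f s \<ge> 0" by simp
qed

lemma lfun_le1: assumes "f \<in> lfun n" shows "f s \<le> 1"
proof -
  obtain j where "j \<le> n" "f s = real j / real n" using lfunn[OF assms] by blast
  thus ?thesis using n1 by (simp add: divide_le_eq_1)
qed

lemma tau_idx: "f s = real j / real n \<Longrightarrow> tau (real i / real n) f s = (if i \<le> j then 1 else 0)"
  by (simp add: tau_def divle)

lemma E_luk: "f \<in> lfun n \<Longrightarrow> E C f \<in> luk n"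
  using E_idx[OF lfun_nonneg] idx_le[OF lfun_nonneg] luk_n by simp

lemma isEF: "is_EF n E" unfolding is_EF_def using E_luk by blast

lemma omono: "outcome_monotonic n E"
  unfolding outcome_monotonic_def
proof (intro allI ballI impI)
  fix C and f g :: "'s \<Rightarrow> real" assume f: "f \<in> lfun n" and g: "g \<in> lfun n" and le: "\<forall>s. g s \<le> f s"
  note fn = lfun_nonneg[OF f] and gn = lfun_nonneg[OF g]
  have "H C (tau (real (idx C g) / real n) g) = 1" using char[OF gn idx_le[OF gn]] by simp
  moreover have "H C (tau (real (idx C g) / real n) g) \<le> H C (tau (real (idx C g) / real n) f)"
    by (rule Hmono[OF tau_lfun1 tau_lfun1]) (intro allI tau_mono_f le)
  ultimately have "H C (tau (real (idx C g) / real n) f) = 1" using Hge1[OF tau_lfun1] by simp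
  hence "idx C g \<le> idx C f" using char[OF fn idx_le[OF gn]] by simp
  thus "E C g \<le> E C f" using E_idx[OF fn] E_idx[OF gn] divle by simp
qed

lemma hom_gen:
  fixes f g :: "'s \<Rightarrow> real"
  assumes f: "f \<in> lfun n"
    and phi: "\<And>j. j \<le> n \<Longrightarrow> phi j \<le> n"
    and gs: "\<And>s j. j \<le> n \<Longrightarrow> f s = real j / real n \<Longrightarrow> g s = real (phi j) / real n"
    and t: "\<And>i. i \<le> n \<Longrightarrow> t i \<le> n"
    and eq: "\<And>i j. i \<le> n \<Longrightarrow> j \<le> n \<Longrightarrow> (i \<le> phi j \<longleftrightarrow> t i \<le> j)"
  shows "E C g = real (phi (idx C f)) / real n"
proof -
  note fn = lfun_nonneg[OF f]
  have gn: "\<forall>s. g s \<ge> 0"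
  proof
    fix s obtain j where "j \<le> n" "f s = real j / real n" using lfunn[OF f] by blast
    thus "g s \<ge> 0" using gs by simp
  qed
  have tt: "tau (real i / real n) g = tau (real (t i) / real n) f" if "i \<le> n" for i
  proof
    fix s obtain j where j: "j \<le> n" "f s = real j / real n" using lfunn[OF f] by blast
    show "tau (real i / real n) g s = tau (real (t i) / real n) f s"
      using tau_idx[where f=g and s=s, OF gs[OF j]] tau_idx[where f=f and s=s, OF j(2)] eq[OF that j(1)] by simp
  qed
  have "idx C g = phi (idx C f)"
  proof (rule idx_eqI[of n])
    show "\<forall>i\<le>n. (i \<le> idx C g) = (i \<le> phi (idx C f))"
    proof (intro allI impI)
      fix i assume i: "i \<le> n"
      have "i \<le> idx C g \<longleftrightarrow> H C (tau (real i / real n) g) = 1" using char[OF gn i] by simp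
      also have "\<dots> \<longleftrightarrow> H C (tau (real (t i) / real n) f) = 1" using tt[OF i] by simp
      also have "\<dots> \<longleftrightarrow> t i \<le> idx C f" using char[OF fn t[OF i]] by simp
      also have "\<dots> \<longleftrightarrow> i \<le> phi (idx C f)" using eq[OF i idx_le[OF fn]] by simp
      finally show "(i \<le> idx C g) = (i \<le> phi (idx C f))" .
    qed
  qed (use idx_le[OF gn] idx_le[OF fn] phi in auto)
  thus ?thesis using E_idx[OF gn] by simp
qed

lemma loplus_n: "a \<le> n \<Longrightarrow> loplus (real a / real n) (real a / real n) = real (min (2*a) n) / real n"
  using n1 by (auto simp: loplus_def min_def field_simps)

lemma lodot_n: "a \<le> n \<Longrightarrow> lodot (real a / real n) (real a / real n) = real (2*a - n) / real n"
  using n1 by (auto simp: lodot_def max_def field_simps of_nat_diff)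

lemma homog: "homogeneous n E"
  unfolding homogeneous_def
proof (intro allI ballI conjI)
  fix C and f :: "'s \<Rightarrow> real" assume f: "f \<in> lfun n"
  note fn = lfun_nonneg[OF f]
  show "E C (\<lambda>s. loplus (f s) (f s)) = loplus (E C f) (E C f)"
    apply (subst hom_gen[OF f, where phi="\<lambda>j. min (2*j) n" and t="\<lambda>i. (i+1) div 2"])
    using loplus_n E_idx[OF fn] idx_le[OF fn] by auto
  show "E C (\<lambda>s. lodot (f s) (f s)) = lodot (E C f) (E C f)"
    apply (subst hom_gen[OF f, where phi="\<lambda>j. 2*j - n" and t="\<lambda>i. if i = 0 then 0 else (n+i+1) div 2"])
    using lodot_n E_idx[OF fn] idx_le[OF fn] by auto
qed

lemma live: "liveness E"
  unfolding liveness_def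
proof
  fix C
  let ?f = "(\<lambda>_. 1) :: 's \<Rightarrow> real"
  have fn: "\<forall>s. ?f s \<ge> 0" by simp
  have "tau (real n / real n) ?f = ?f" using n1 by (auto simp: tau_def)
  hence "n \<le> idx C ?f" using char[OF fn order_refl] Hlive by simp
  hence "idx C ?f = n" using idx_le[OF fn, of C] by (simp add: le_antisym)
  thus "E C ?f = 1" using E_idx[OF fn] n1 by simp
qed

lemma safe: "safety E"
  unfolding safety_def
proof
  fix C
  let ?f = "(\<lambda>_. 0) :: 's \<Rightarrow> real"
  have fn: "\<forall>s. ?f s \<ge> 0" by simp
  have "idx C ?f = 0"
  proof (rule ccontr)
    assume "idx C ?f \<noteq> 0"
    hence "real (idx C ?f) / real n > 0" using n1 by simp
    hence "tau (real (idx C ?f) / real n) ?f = ?f" by (auto simp: tau_def)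
    moreover have "H C (tau (real (idx C ?f) / real n) ?f) = 1"
      using char[OF fn idx_le[OF fn]] by simp
    ultimately show False using Hsafe by simp
  qed
  thus "E C ?f = 0" using E_idx[OF fn] by simp
qed

lemma supadd: "superadditive n E"
  unfolding superadditive_def
proof (intro allI ballI impI)
  fix C1 C2 :: "'p set" and f g :: "'s \<Rightarrow> real"
  assume f: "f \<in> lfun n" and g: "g \<in> lfun n" and d: "C1 \<inter> C2 = {}"
  note fn = lfun_nonneg[OF f] and gn = lfun_nonneg[OF g]
  let ?m = "min (idx C1 f) (idx C2 g)"
  let ?h = "\<lambda>s. min (f s) (g s)"
  have hn: "\<forall>s. ?h s \<ge> 0" using fn gn by simp
  have mn: "?m \<le> n" using idx_le[OF fn, of C1] by simp
  have h1: "H C1 (tau (real ?m / real n) f) = 1" using char[OF fn mn] by simp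
  have h2: "H C2 (tau (real ?m / real n) g) = 1" using char[OF gn mn] by simp
  have HS: "min (H C1 a) (H C2 b) \<le> H (C1 \<union> C2) (\<lambda>s. min (a s) (b s))"
    if "a \<in> lfun 1" "b \<in> lfun 1" for a b
    using H d that unfolding playable_def superadditive_def by blast
  have te: "(\<lambda>s. min (tau t f s) (tau t g s)) = tau t ?h" for t
    by (auto simp: tau_def)
  have "H (C1 \<union> C2) (tau (real ?m / real n) ?h) \<ge> 1"
    using HS[OF tau_lfun1 tau_lfun1, of "real ?m / real n" f "real ?m / real n" g] h1 h2 te by simp
  hence "H (C1 \<union> C2) (tau (real ?m / real n) ?h) = 1" using Hge1[OF tau_lfun1] by simp
  hence "?m \<le> idx (C1 \<union> C2) ?h" using char[OF hn mn] by simp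
  hence le: "real ?m / real n \<le> E (C1 \<union> C2) ?h" using E_idx[OF hn] divle by presburger
  have "min (E C1 f) (E C2 g) = real ?m / real n"
    using E_idx[OF fn] E_idx[OF gn] divle by (auto simp: min_def)
  thus "min (E C1 f) (E C2 g) \<le> E (C1 \<union> C2) ?h" using le by simp
qed

lemma nmax: "N_maximal n E"
  unfolding N_maximal_def
proof
  fix f :: "'s \<Rightarrow> real" assume f: "f \<in> lfun n"
  note fn = lfun_nonneg[OF f]
  let ?g = "\<lambda>s. 1 - f s"
  have gn: "\<forall>s. ?g s \<ge> 0" using lfun_le1[OF f] by simp
  define k where "k = idx UNIV f"
  have kn: "k \<le> n" using idx_le[OF fn] k_def by simp
  show "1 - E {} ?g \<le> E UNIV f"
  proof (cases "k = n")
    case True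
    hence "E UNIV f = 1" using E_idx[OF fn] k_def n1 by simp
    moreover have "E {} ?g \<ge> 0" using E_idx[OF gn] by simp
    ultimately show ?thesis by simp
  next
    case False
    hence kl: "k < n" using kn by simp
    let ?h = "tau (real (k+1) / real n) f"
    have "H UNIV ?h \<noteq> 1" using char[OF fn, of "k+1" UNIV] kl k_def by simp
    hence h0: "H UNIV ?h = 0" using Hval[OF tau_lfun1] by metis
    have "1 - H {} (\<lambda>s. 1 - ?h s) \<le> H UNIV ?h"
      using H tau_lfun1 unfolding playable_def N_maximal_def by blast
    hence ge: "H {} (\<lambda>s. 1 - ?h s) \<ge> 1" using h0 by simp
    have eqt: "(\<lambda>s. 1 - ?h s) = tau (real (n - k) / real n) ?g"
    proof
      fix s obtain j where j: "j \<le> n" "f s = real j / real n" using lfunn[OF f] by blast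
      have gs: "?g s = real (n - j) / real n" using j n1 by (simp add: of_nat_diff field_simps)
      have a: "?h s = (if k+1 \<le> j then 1 else 0)" by (rule tau_idx[where f=f and s=s, OF j(2)])
      have b: "tau (real (n - k) / real n) ?g s = (if n - k \<le> n - j then 1 else 0)"
        by (rule tau_idx[where f="?g" and s=s, OF gs])
      show "1 - ?h s = tau (real (n - k) / real n) ?g s"
        by (simp only: a b) (use j(1) kl in auto)
    qed
    have "H {} (tau (real (n - k) / real n) ?g) = 1"
      using ge eqt Hge1[OF tau_lfun1] by metis
    hence "n - k \<le> idx {} ?g" using char[OF gn, of "n-k"] by simp
    hence "real (n - k) / real n \<le> E {} ?g" using E_idx[OF gn] divle by simp
    moreover have "1 - real (n - k) / real n = E UNIV f"
      using E_idx[OF fn] k_def kl n1 by (simp add: of_nat_diff field_simps)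
    ultimately show ?thesis by linarith
  qed
qed

lemma sharp: assumes f: "f \<in> lfun 1" shows "E C f = H C f"
proof -
  have f01: "\<forall>s. f s = 0 \<or> f s = 1" using f by (simp add: lfun1)
  have fn: "\<forall>s. f s \<ge> 0" using f01 by (metis order_refl zero_le_one)
  have "idx C f = (if H C f = 1 then n else 0)"
  proof (rule idx_eqI[of n])
    show "\<forall>i\<le>n. (i \<le> idx C f) = (i \<le> (if H C f = 1 then n else 0))"
    proof (intro allI impI)
      fix i assume i: "i \<le> n"
      show "(i \<le> idx C f) = (i \<le> (if H C f = 1 then n else 0))"
      proof (cases "i = 0")
        case True thus ?thesis by simp
      next
        case False
        have "tau (real i / real n) f = f"
        proof
          fix s
          have "real i / real n \<le> 1" "real i / real n > 0" using i False n1 by simp_all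
          thus "tau (real i / real n) f s = f s" using f01[rule_format, of s] by (auto simp: tau_def)
        qed
        thus ?thesis using char[OF fn i] False i by auto
      qed
    qed
  qed (use idx_le[OF fn] in auto)
  thus ?thesis using E_idx[OF fn] n1 Hval[OF f, of C] by auto
qed

lemma princ: assumes "truly_playable 1 H" shows "principal n E"
proof -
  obtain g :: "'s \<Rightarrow> real" where g: "g \<in> lfun 1"
    and geq: "{f \<in> lfun 1. H {} f = 1} = {f \<in> lfun 1. \<forall>s. lodot_pow (g s) 1 \<le> f s}"
    using assms unfolding truly_playable_def principal_def by blast
  have g01: "\<forall>s. g s = 0 \<or> g s = 1" using g by (simp add: lfun1)
  have gln: "g \<in> lfun n" unfolding lfun_def
  proof
    show "\<forall>s. g s \<in> luk n"
    proof
      fix s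
      have "real 0 / real n \<in> luk n" "real n / real n \<in> luk n" by (rule luk_n, simp)+
      thus "g s \<in> luk n" using g01[rule_format, of s] n1 by auto
    qed
  qed
  have key: "E {} f = 1 \<longleftrightarrow> (\<forall>s. lodot_pow (g s) n \<le> f s)" if f: "f \<in> lfun n" for f
  proof -
    note fn = lfun_nonneg[OF f]
    have "E {} f = 1 \<longleftrightarrow> idx {} f = n" using E_idx[OF fn] n1 by (auto simp: divide_eq_1_iff)
    also have "\<dots> \<longleftrightarrow> H {} (tau (real n / real n) f) = 1"
      using char[OF fn order_refl, of "{}"] idx_le[OF fn, of "{}"] by (auto intro: le_antisym)
    also have "\<dots> \<longleftrightarrow> H {} (tau 1 f) = 1" using n1 by simp
    also have "\<dots> \<longleftrightarrow> (\<forall>s. lodot_pow (g s) 1 \<le> tau 1 f s)"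
      using geq tau_lfun1[of 1 f] by blast
    also have "\<dots> \<longleftrightarrow> (\<forall>s. lodot_pow (g s) n \<le> f s)"
    proof -
      have "lodot_pow (g s) 1 \<le> tau 1 f s \<longleftrightarrow> lodot_pow (g s) n \<le> f s" for s
        using g01[rule_format, of s] fn lodot_pow1 lodot_pow0[OF n1]
        by (auto simp: tau_def lodot_def)
      thus ?thesis by blast
    qed
    finally show ?thesis .
  qed
  show ?thesis unfolding principal_def using gln key by blast
qed

end

theorem mainTheorem4:
  fixes H E :: "'p::finite set \<Rightarrow> ('s \<Rightarrow> real) \<Rightarrow> real"
    and n :: nat
  assumes N2: "card (UNIV :: 'p set) \<ge> 2"
    and S2: "\<exists>a b :: 's. a \<noteq> b"
    and n1: "n \<ge> 1"
    and H: "playable 1 H"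
    and E_def: "\<forall>C f. E C f = Max {real i / real n | i. i \<le> n \<and> H C (tau (real i / real n) f) = 1}"
  shows "playable n E \<and> (\<forall>C. \<forall>f\<in>lfun 1. E C f = H C f)
         \<and> (truly_playable 1 H \<longrightarrow> truly_playable n E)"
proof -
  interpret LL H E n using n1 H E_def by unfold_locales
  have P: "playable n E" unfolding playable_def
    using isEF omono nmax supadd homog live safe by blast
  show ?thesis using P sharp princ unfolding truly_playable_def[of n E] by blast
qed

end
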